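(* Assume $h,\tau$ are such that $\int_0^T\int_{\mathcal D}\tilde Q_{h\tau}(t)\,dx\,dt>0$, and let $\rho>0$. For $V\in\mathbb U_{h\tau}$ define $$\mu(V)=\frac{\max\big\{\int_0^T\int_{\mathcal D}\mathbb E[X_{h\tau}(V)]\,dx\,dt-\delta,\,0\big\}}{\rho\int_0^T\int_{\mathcal D}\tilde Q_{h\tau}(t)\,dx\,dt},\qquad \mathbb R_hV:=V-\rho\,\mu(V)\,\tilde M_{h\tau}.$$ Then for every $V\in\mathbb U_{h\tau}$, $$\mathbb E\big[[V-\mathbb R_hV,\,W-\mathbb R_hV]\big]\le0\qquad\forall W\in\mathbb U_{h\tau,\delta},$$ and for all $V,P\in\mathbb U_{h\tau}$, $$\int_0^T\mathbb E\|\mathbb R_hV(t)-\mathbb R_hP(t)\|^2dt\le\int_0^T\mathbb E\|V(t)-P(t)\|^2dt.$$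
   Context: Setting: $T>0$; complete probability space with $\mathbb F=\{\mathcal F_t\}$ the natural filtration of a one-dimensional standard Brownian motion $W_t$; $\mathcal D\subset\mathbb R^d$ ($d=1,2,3$) bounded with smooth boundary; $\|\cdot\|$ the $L^2(\mathcal D)$ norm; $[U,V]=\int_0^T\int_{\mathcal D}UV\,dx\,dt$. Data $\delta\in\mathbb R$, $X_0\in L^2(\mathcal D)$, $\sigma$ adapted square-integrable $L^2(\mathcal D)$-valued. Finite elements: regular triangulation with mesh size $h$; $\mathbb V_h^1$ continuous piecewise linears vanishing on $\partial\mathcal D$; $\Pi^1_h$ the $L^2$-projection onto $\mathbb V^1_h$; $\Delta_h$ with $(-\Delta_h\xi_h,\phi_h)=(\nabla\xi_h,\nabla\phi_h)$. Time grid $t_n=n\tau$, $\tau=T/N\le1$, $\Delta W_{n+1}=W_{t_{n+1}}-W_{t_n}$. $\mathbb U_{h\tau}$: $\mathbb F$-adapted square-integrable $\mathbb V^1_h$-valued processes with $U(t)=U(t_n)$ on $[t_n,t_{n+1})$. For $V\in\mathbb U_{h\tau}$, $X_{h\tau}(V)$ is defined by $X(t_{n+1})-X(t_n)=\tau[\Delta_hX(t_{n+1})+V(t_n)]+\Pi^1_h\sigma(t_n)\Delta W_{n+1}$, $X(0)=\Pi^1_hX_0$, and $X(t)=\mathbb E[X(t_{n+1})|\mathcal F_{t_n}]$ for $t\in(t_n,t_{n+1})$. $\mathbb U_{h\tau,\delta}=\{V\in\mathbb U_{h\tau}:\int_0^T\int_{\mathcal D}\mathbb E[X_{h\tau}(V)]dxdt\le\delta\}$.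 Deterministic functions: $\tilde M_{h\tau}$ ($\mathbb V^1_h$-valued, $\tilde M(t)=\tilde M(t_n)$ on $[t_n,t_{n+1})$) solves $\tilde M_{h\tau}(t_{n+1})-\tilde M_{h\tau}(t_n)=\tau[-\Delta_h\tilde M_{h\tau}(t_n)-\Pi^1_h1]$, $\tilde M_{h\tau}(T)=0$; $\tilde Q_{h\tau}$ ($\mathbb V^1_h$-valued, $\tilde Q(t)=\tilde Q(t_{n+1})$ on $(t_n,t_{n+1}]$) solves $\tilde Q_{h\tau}(t_{n+1})-\tilde Q_{h\tau}(t_n)=\tau[\Delta_h\tilde Q_{h\tau}(t_{n+1})+\tilde M_{h\tau}(t_n)]$, $\tilde Q_{h\tau}(0)=0$. *)

theory Defs
  imports "HOL-Probability.Probability"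
begin

definition brownian_motion :: "'a measure \<Rightarrow> (real \<Rightarrow> 'a \<Rightarrow> real) \<Rightarrow> bool" where
  "brownian_motion M B \<longleftrightarrow> prob_space M \<and>
     (\<forall>t\<ge>0. B t \<in> borel_measurable M) \<and>
     (\<forall>\<omega>\<in>space M. B 0 \<omega> = 0) \<and>
     (\<forall>\<omega>\<in>space M. continuous_on {0..} (\<lambda>t. B t \<omega>)) \<and>
     (\<forall>s t. 0 \<le> s \<and> s < t \<longrightarrow>
        distributed M lborel (\<lambda>\<omega>. B t \<omega> - B s \<omega>) (normal_density 0 (sqrt (t - s)))) \<and>
     (\<forall>(ts::nat \<Rightarrow> real) k. 0 \<le> ts 0 \<and> (\<forall>i<k. ts i < ts (Suc i)) \<longrightarrow>
        prob_space.indep_vars M (\<lambda>_. borel) (\<lambda>i \<omega>. B (ts (Suc i)) \<omega> - B (ts i) \<omega>) {..<k})"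

definition nat_filtration :: "'a measure \<Rightarrow> (real \<Rightarrow> 'a \<Rightarrow> real) \<Rightarrow> real \<Rightarrow> 'a measure" where
  "nat_filtration M B t = sigma (space M)
     ((\<Union>s\<in>{0..t}. {B s -` A \<inter> space M | A. A \<in> sets borel}) \<union> null_sets M)"

definition vcond_exp :: "'a measure \<Rightarrow> 'a measure \<Rightarrow> ('a \<Rightarrow> 'v::euclidean_space) \<Rightarrow> 'a \<Rightarrow> 'v" where
  "vcond_exp M F Y = (\<lambda>\<omega>. \<Sum>b\<in>Basis. real_cond_exp M F (\<lambda>x. inner (Y x) b) \<omega> *\<^sub>R b)"

(* index n with t in [t_n, t_{n+1}) *)
definition tstep :: "real \<Rightarrow> real \<Rightarrow> nat" where
  "tstep \<tau> t = nat \<lfloor>t / \<tau>\<rfloor>"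

definition admissible :: "'a measure \<Rightarrow> (real \<Rightarrow> 'a \<Rightarrow> real) \<Rightarrow> real \<Rightarrow> nat \<Rightarrow> (real \<Rightarrow> 'a \<Rightarrow> 'v::euclidean_space) set" where
  "admissible M B T N = {U. \<forall>n<N.
      U (real n * (T / real N)) \<in> borel_measurable (nat_filtration M B (real n * (T / real N))) \<and>
      integrable M (\<lambda>\<omega>. (norm (U (real n * (T / real N)) \<omega>))\<^sup>2) \<and>
      (\<forall>t. real n * (T / real N) \<le> t \<and> t < real (Suc n) * (T / real N) \<longrightarrow>
             U t = U (real n * (T / real N)))}"

(* Discrete state X_{h tau}(V)(t_n); Lap = Delta_h, X0 = Pi_h X_0, S n = Pi_h sigma(t_n) *)
fun Xdisc :: "(real \<Rightarrow> 'a \<Rightarrow> real) \<Rightarrow> real \<Rightarrow> ('v::euclidean_space \<Rightarrow> 'v) \<Rightarrow> 'v \<Rightarrow> (nat \<Rightarrow> 'a \<Rightarrow> 'v)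
      \<Rightarrow> (real \<Rightarrow> 'a \<Rightarrow> 'v) \<Rightarrow> nat \<Rightarrow> 'a \<Rightarrow> 'v" where
  "Xdisc B \<tau> Lap X0 S V 0 \<omega> = X0"
| "Xdisc B \<tau> Lap X0 S V (Suc n) \<omega> =
     (THE y. y - Xdisc B \<tau> Lap X0 S V n \<omega> =
        \<tau> *\<^sub>R (Lap y + V (real n * \<tau>) \<omega>)
        + (B (real (Suc n) * \<tau>) \<omega> - B (real n * \<tau>) \<omega>) *\<^sub>R S n \<omega>)"

definition Xproc :: "'a measure \<Rightarrow> (real \<Rightarrow> 'a \<Rightarrow> real) \<Rightarrow> real \<Rightarrow> nat \<Rightarrow> ('v::euclidean_space \<Rightarrow> 'v) \<Rightarrow> 'v
      \<Rightarrow> (nat \<Rightarrow> 'a \<Rightarrow> 'v) \<Rightarrow> (real \<Rightarrow> 'a \<Rightarrow> 'v) \<Rightarrow> real \<Rightarrow> 'a \<Rightarrow> 'v" where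
  "Xproc M B T N Lap X0 S V t =
     (let \<tau> = T / real N; n = tstep \<tau> t in
      if t = real n * \<tau> then Xdisc B \<tau> Lap X0 S V n
      else vcond_exp M (nat_filtration M B (real n * \<tau>)) (Xdisc B \<tau> Lap X0 S V (Suc n)))"

(* int_0^T int_D E[X_{h tau}(V)] dx dt, with int_D xi dx = (xi, Pi_h 1) for xi in V_h *)
definition cost :: "'a measure \<Rightarrow> (real \<Rightarrow> 'a \<Rightarrow> real) \<Rightarrow> real \<Rightarrow> nat \<Rightarrow> ('v::euclidean_space \<Rightarrow> 'v) \<Rightarrow> 'v
      \<Rightarrow> 'v \<Rightarrow> (nat \<Rightarrow> 'a \<Rightarrow> 'v) \<Rightarrow> (real \<Rightarrow> 'a \<Rightarrow> 'v) \<Rightarrow> real" where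
  "cost M B T N Lap one X0 S V =
     integral {0..T} (\<lambda>t. inner (integral\<^sup>L M (Xproc M B T N Lap X0 S V t)) one)"

definition admissible_delta where
  "admissible_delta M B T N Lap one X0 S \<delta> =
     {V \<in> admissible M B T N. cost M B T N Lap one X0 S V \<le> \<delta>}"

(* tilde M: backward, Mback k = tilde M(t_{N-k}) *)
fun Mback :: "real \<Rightarrow> ('v::euclidean_space \<Rightarrow> 'v) \<Rightarrow> 'v \<Rightarrow> nat \<Rightarrow> 'v" where
  "Mback \<tau> Lap one 0 = 0"
| "Mback \<tau> Lap one (Suc k) = (THE y. Mback \<tau> Lap one k - y = \<tau> *\<^sub>R (- Lap y - one))"

definition Mdisc :: "real \<Rightarrow> nat \<Rightarrow> ('v::euclidean_space \<Rightarrow> 'v) \<Rightarrow> 'v \<Rightarrow> nat \<Rightarrow> 'v" where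
  "Mdisc T N Lap one n = Mback (T / real N) Lap one (N - n)"

definition Mtilde :: "real \<Rightarrow> nat \<Rightarrow> ('v::euclidean_space \<Rightarrow> 'v) \<Rightarrow> 'v \<Rightarrow> real \<Rightarrow> 'v" where
  "Mtilde T N Lap one t = Mdisc T N Lap one (tstep (T / real N) t)"

fun Qdisc :: "real \<Rightarrow> nat \<Rightarrow> ('v::euclidean_space \<Rightarrow> 'v) \<Rightarrow> 'v \<Rightarrow> nat \<Rightarrow> 'v" where
  "Qdisc T N Lap one 0 = 0"
| "Qdisc T N Lap one (Suc n) = (THE y. y - Qdisc T N Lap one n =
      (T / real N) *\<^sub>R (Lap y + Mdisc T N Lap one n))"

(* tilde Q(t) = tilde Q(t_{n+1}) on (t_n, t_{n+1}] *)
definition Qtilde :: "real \<Rightarrow> nat \<Rightarrow> ('v::euclidean_space \<Rightarrow> 'v) \<Rightarrow> 'v \<Rightarrow> real \<Rightarrow> 'v" where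
  "Qtilde T N Lap one t = Qdisc T N Lap one (nat \<lceil>t / (T / real N)\<rceil>) "

definition mu where
  "mu M B T N Lap one X0 S \<delta> \<rho> V =
     max (cost M B T N Lap one X0 S V - \<delta>) 0 /
       (\<rho> * integral {0..T} (\<lambda>t. inner (Qtilde T N Lap one t) one))"

definition Rh where
  "Rh M B T N Lap one X0 S \<delta> \<rho> V =
     (\<lambda>t \<omega>. V t \<omega> - (\<rho> * mu M B T N Lap one X0 S \<delta> \<rho> V) *\<^sub>R Mtilde T N Lap one t)"

end

theory Submission
  imports Defs
begin

lemma step_has_integral:
  fixes f :: "real \<Rightarrow> 'b::banach" and c :: "nat \<Rightarrow> 'b"
  assumes tau: "\<tau> > 0"
    and h: "\<And>n t. n < K \<Longrightarrow> real n * \<tau> < t \<Longrightarrow> t < real (Suc n) * \<tau> \<Longrightarrow> f t = c n"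
  shows "(f has_integral (\<Sum>n<K. \<tau> *\<^sub>R c n)) {0..real K * \<tau>}"
  using h
proof (induction K)
  case 0
  show ?case using has_integral_refl(2)[of f "0::real"] by simp
next
  case (Suc K)
  have IH: "(f has_integral (\<Sum>n<K. \<tau> *\<^sub>R c n)) {0..real K * \<tau>}"
    using Suc.IH Suc.prems by simp
  have le: "real K * \<tau> \<le> real (Suc K) * \<tau>" using tau by simp
  have c: "((\<lambda>x. c K) has_integral (Henstock_Kurzweil_Integration.content {real K * \<tau>..real (Suc K) * \<tau>} *\<^sub>R c K)) {real K * \<tau>..real (Suc K) * \<tau>}"
    by (rule has_integral_const_real)
  have ct: "Henstock_Kurzweil_Integration.content {real K * \<tau>..real (Suc K) * \<tau>} = \<tau>" using le by (simp add: algebra_simps)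
  have f2: "(f has_integral (\<tau> *\<^sub>R c K)) {real K * \<tau>..real (Suc K) * \<tau>}"
  proof (rule has_integral_spike_finite[where S="{real K * \<tau>, real (Suc K) * \<tau>}"])
    show "finite {real K * \<tau>, real (Suc K) * \<tau>}" by simp
    show "((\<lambda>x. c K) has_integral \<tau> *\<^sub>R c K) {real K * \<tau>..real (Suc K) * \<tau>}" using c ct by simp
    fix x assume "x \<in> {real K * \<tau>..real (Suc K) * \<tau>} - {real K * \<tau>, real (Suc K) * \<tau>}"
    then have "real K * \<tau> < x" "x < real (Suc K) * \<tau>" by auto
    then show "f x = c K" using Suc.prems[of K x] by simp
  qed
  have "(f has_integral ((\<Sum>n<K. \<tau> *\<^sub>R c n) + \<tau> *\<^sub>R c K)) {0..real (Suc K) * \<tau>}"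
    using has_integral_combine[OF _ le IH f2] tau by simp
  then show ?case by simp
qed

lemma tstep_eq:
  assumes "\<tau> > 0" "real n * \<tau> \<le> t" "t < real (Suc n) * \<tau>"
  shows "tstep \<tau> t = n"
proof -
  have "real n \<le> t / \<tau>" "t / \<tau> < real n + 1" using assms by (auto simp: field_simps)
  then have "\<lfloor>t / \<tau>\<rfloor> = int n" by (simp add: floor_eq_iff)
  then show ?thesis by (simp add: tstep_def)
qed

lemma ceil_eq:
  assumes "\<tau> > 0" "real n * \<tau> < t" "t \<le> real (Suc n) * \<tau>"
  shows "nat \<lceil>t / \<tau>\<rceil> = Suc n"
proof -
  have "real n < t / \<tau>" "t / \<tau> \<le> real n + 1" using assms by (auto simp: field_simps)
  then have "\<lceil>t / \<tau>\<rceil> = int n + 1" by (simp add: ceiling_eq_iff)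
  then show ?thesis by simp
qed

locale ctx =
  fixes M :: "'a measure" and B :: "real \<Rightarrow> 'a \<Rightarrow> real"
    and T :: real and N :: nat
    and a :: "'v::euclidean_space \<Rightarrow> 'v \<Rightarrow> real" and Lap :: "'v \<Rightarrow> 'v" and one :: 'v
    and X0 :: 'v and S :: "nat \<Rightarrow> 'a \<Rightarrow> 'v"
  assumes BM: "brownian_motion M B"
    and T: "T > 0" and N: "N > 0"
    and a_sym: "\<forall>x y. a x y = a y x"
    and a_pos: "\<forall>x. x \<noteq> 0 \<longrightarrow> a x x > 0"
    and Lap_lin: "linear Lap"
    and Lap_def: "\<forall>x y. inner (- Lap x) y = a x y"
    and S_adapted: "\<forall>n<N. S n \<in> borel_measurable (nat_filtration M B (real n * (T / real N)))
                        \<and> integrable M (\<lambda>\<omega>. (norm (S n \<omega>))\<^sup>2)"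
begin

definition tau :: real where "tau = T / real N"

lemma tau_pos: "tau > 0" using T N by (simp add: tau_def)
lemma T_eq: "T = real N * tau" using N by (simp add: tau_def)

definition L :: "'v \<Rightarrow> 'v" where "L y = y - tau *\<^sub>R Lap y"

lemma L_lin: "linear L"
  by (rule linearI) (auto simp: L_def linear_add[OF Lap_lin] linear_scale[OF Lap_lin] algebra_simps)

lemma Lap_inner: "inner (Lap x) y = - a x y"
  using Lap_def by (metis inner_minus_left minus_minus)

lemma L_sym: "inner (L x) y = inner x (L y)"
  unfolding L_def using Lap_inner a_sym
  by (simp add: inner_diff_left inner_diff_right inner_commute[of x "Lap y"])

lemma L_inj: "inj L"
proof -
  have "L y = 0 \<Longrightarrow> y = 0" for y
  proof (rule ccontr)
    assume h: "L y = 0" "y \<noteq> 0"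
    have "0 = inner (L y) y" using h by simp
    also have "\<dots> = inner y y + tau * a y y" unfolding L_def using Lap_inner
      by (simp add: inner_diff_left)
    also have "\<dots> > 0" using h a_pos tau_pos by (simp add: add_pos_pos)
    finally show False by simp
  qed
  then show ?thesis using L_lin by (simp add: linear_inj_iff_eq_0)
qed

lemma L_surj: "surj L"
  using L_lin L_inj linear_injective_imp_surjective by blast

definition Rv :: "'v \<Rightarrow> 'v" where "Rv z = (THE y. L y = z)"

lemma L_ex1: "\<exists>!y. L y = z"
  using L_inj L_surj by (metis injD surjD)

lemma L_Rv[simp]: "L (Rv z) = z"
  unfolding Rv_def using theI'[OF L_ex1] .

lemma Rv_L[simp]: "Rv (L y) = y"
  using L_inj L_Rv by (metis injD)

lemma Rv_lin: "linear Rv"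
proof (rule linearI)
  fix x y :: 'v and c :: real
  have "L (Rv x + Rv y) = x + y" using L_lin by (simp add: linear_add)
  then show "Rv (x + y) = Rv x + Rv y" by (metis Rv_L)
  have "L (c *\<^sub>R Rv x) = c *\<^sub>R x" using L_lin by (simp add: linear_scale)
  then show "Rv (c *\<^sub>R x) = c *\<^sub>R Rv x" by (metis Rv_L)
qed

lemma Rv_bl: "bounded_linear Rv" using Rv_lin linear_conv_bounded_linear by blast
lemma L_bl: "bounded_linear L" using L_lin linear_conv_bounded_linear by blast

lemma THE_step: "(THE y. y - x = tau *\<^sub>R (Lap y + v) + w) = Rv (x + tau *\<^sub>R v + w)"
proof -
  have "(\<lambda>y. y - x = tau *\<^sub>R (Lap y + v) + w) = (\<lambda>y. L y = x + tau *\<^sub>R v + w)"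
    by (rule ext) (auto simp: L_def algebra_simps)
  then show ?thesis by (simp add: Rv_def)
qed

lemma THE_stepQ: "(THE y. y - x = tau *\<^sub>R (Lap y + v)) = Rv (x + tau *\<^sub>R v)"
  using THE_step[of x v 0] by simp

lemma THE_stepM: "(THE y. x - y = tau *\<^sub>R (- Lap y - one)) = Rv (x + tau *\<^sub>R one)"
proof -
  have "(\<lambda>y. x - y = tau *\<^sub>R (- Lap y - one)) = (\<lambda>y. L y = x + tau *\<^sub>R one)"
    by (rule ext) (auto simp: L_def algebra_simps)
  then show ?thesis by (simp add: Rv_def)
qed

abbreviation X where "X V n \<equiv> Xdisc B tau Lap X0 S V n"
definition dW :: "nat \<Rightarrow> 'a \<Rightarrow> real" where
  "dW n \<omega> = B (real (Suc n) * tau) \<omega> - B (real n * tau) \<omega>"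

lemma X_Suc: "X V (Suc n) \<omega> = Rv (X V n \<omega> + tau *\<^sub>R V (real n * tau) \<omega> + dW n \<omega> *\<^sub>R S n \<omega>)"
  by (simp only: Xdisc.simps THE_step dW_def)

abbreviation md where "md n \<equiv> Mdisc T N Lap one n"

lemma Mback_Suc: "Mback tau Lap one (Suc k) = Rv (Mback tau Lap one k + tau *\<^sub>R one)"
  by (simp add: THE_stepM)

lemma md_rec: "n < N \<Longrightarrow> L (md n) = md (Suc n) + tau *\<^sub>R one"
proof -
  assume n: "n < N"
  then have e: "N - n = Suc (N - Suc n)" by simp
  show ?thesis unfolding Mdisc_def tau_def[symmetric] e Mback_Suc by simp
qed

lemma md_N: "md N = 0" by (simp add: Mdisc_def)

lemma Q_Suc: "Qdisc T N Lap one (Suc n) = Rv (Qdisc T N Lap one n + tau *\<^sub>R md n)"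
  unfolding Qdisc.simps tau_def[symmetric] by (rule THE_stepQ)

lemma Q_rec: "L (Qdisc T N Lap one (Suc n)) = Qdisc T N Lap one n + tau *\<^sub>R md n"
  by (simp only: Q_Suc L_Rv)

lemma prob: "prob_space M" using BM by (simp add: brownian_motion_def)

lemma B_meas: "t \<ge> 0 \<Longrightarrow> B t \<in> borel_measurable M" using BM by (simp add: brownian_motion_def)

lemma subalg: assumes "t \<ge> 0" shows "subalgebra M (nat_filtration M B t)"
proof -
  let ?G = "(\<Union>s\<in>{0..t}. {B s -` A \<inter> space M | A. A \<in> sets borel}) \<union> null_sets M"
  have G: "?G \<subseteq> sets M"
  proof
    fix x assume "x \<in> ?G"
    then show "x \<in> sets M"
    proof
      assume "x \<in> (\<Union>s\<in>{0..t}. {B s -` A \<inter> space M | A. A \<in> sets borel})"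
      then obtain s A where "s \<in> {0..t}" "A \<in> sets borel" "x = B s -` A \<inter> space M" by blast
      then show ?thesis using B_meas[of s] by (auto simp: measurable_sets)
    qed auto
  qed
  have P: "?G \<subseteq> Pow (space M)" using G sets.sets_into_space by blast
  have s1: "sets (sigma (space M) ?G) = sigma_sets (space M) ?G" using P by (rule sets_measure_of)
  have s2: "space (sigma (space M) ?G) = space M" by (rule space_measure_of_conv)
  show ?thesis unfolding subalgebra_def nat_filtration_def s1 s2
    using sets.sigma_sets_subset[OF G] by blast
qed

lemma meas_sub: "t \<ge> 0 \<Longrightarrow> f \<in> borel_measurable (nat_filtration M B t) \<Longrightarrow> f \<in> borel_measurable M"
  using measurable_from_subalg subalg by blast

lemma sq_int_int:
  fixes f :: "'a \<Rightarrow> 'w::{banach,second_countable_topology}"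
  assumes "f \<in> borel_measurable M" "integrable M (\<lambda>\<omega>. (norm (f \<omega>))\<^sup>2)"
  shows "integrable M f"
proof -
  interpret prob_space M by (rule prob)
  have "integrable M (\<lambda>\<omega>. 1 + (norm (f \<omega>))\<^sup>2)" using assms by simp
  moreover have "norm (f \<omega>) \<le> norm (1 + (norm (f \<omega>))\<^sup>2)" for \<omega>
  proof -
    have h1: "0 \<le> (norm (f \<omega>) - 1)\<^sup>2" by simp
    have h2: "(norm (f \<omega>) - 1)\<^sup>2 = (norm (f \<omega>))\<^sup>2 - 2 * norm (f \<omega>) + 1"
      by (simp add: power2_eq_square algebra_simps)
    have h3: "0 \<le> (norm (f \<omega>))\<^sup>2" by simp
    have "norm (f \<omega>) \<le> 1 + (norm (f \<omega>))\<^sup>2" using h1 h2 h3 by linarith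
    then show ?thesis by simp
  qed
  ultimately show ?thesis
    by (intro Bochner_Integration.integrable_bound[where f="\<lambda>\<omega>. 1 + (norm (f \<omega>))\<^sup>2" and g=f] assms(1) AE_I2)
qed

lemma adm:
  assumes "V \<in> admissible M B T N" "n < N"
  shows "V (real n * tau) \<in> borel_measurable M" "integrable M (\<lambda>\<omega>. (norm (V (real n * tau) \<omega>))\<^sup>2)"
    "integrable M (V (real n * tau))"
    "\<And>t. real n * tau \<le> t \<Longrightarrow> t < real (Suc n) * tau \<Longrightarrow> V t = V (real n * tau)"
proof -
  have h: "V (real n * tau) \<in> borel_measurable (nat_filtration M B (real n * tau))"
       "integrable M (\<lambda>\<omega>. (norm (V (real n * tau) \<omega>))\<^sup>2)"
       "\<And>t. real n * tau \<le> t \<Longrightarrow> t < real (Suc n) * tau \<Longrightarrow> V t = V (real n * tau)"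
    using assms(1)[unfolded admissible_def mem_Collect_eq, rule_format, OF assms(2), folded tau_def] by blast+
  show m: "V (real n * tau) \<in> borel_measurable M" using meas_sub[OF _ h(1)] tau_pos by simp
  show "integrable M (\<lambda>\<omega>. (norm (V (real n * tau) \<omega>))\<^sup>2)" by (fact h(2))
  show "integrable M (V (real n * tau))" using sq_int_int[OF m h(2)] .
  show "\<And>t. real n * tau \<le> t \<Longrightarrow> t < real (Suc n) * tau \<Longrightarrow> V t = V (real n * tau)" by (fact h(3))
qed

lemma S_meas: "n < N \<Longrightarrow> S n \<in> borel_measurable M"
proof -
  assume n: "n < N"
  have "S n \<in> borel_measurable (nat_filtration M B (real n * tau))" using S_adapted n unfolding tau_def by blast
  then show ?thesis using meas_sub[of "real n * tau"] tau_pos by simp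
qed

lemma dW_meas: "dW n \<in> borel_measurable M"
  unfolding dW_def using B_meas tau_pos by simp

lemma dW_sq: "integrable M (\<lambda>\<omega>. (dW n \<omega>)\<^sup>2)"
proof -
  have lt: "real n * tau < real (Suc n) * tau" using tau_pos by simp
  have all: "\<forall>s t. 0 \<le> s \<and> s < t \<longrightarrow>
        distributed M lborel (\<lambda>\<omega>. B t \<omega> - B s \<omega>) (normal_density 0 (sqrt (t - s)))"
    using BM unfolding brownian_motion_def by blast
  have "0 \<le> real n * tau \<and> real n * tau < real (Suc n) * tau" using lt tau_pos by simp
  from all[rule_format, OF this]
  have D: "distributed M lborel (dW n) (normal_density 0 (sqrt (real (Suc n) * tau - real n * tau)))"
    unfolding dW_def[abs_def] .
  have "integrable lborel (\<lambda>x. normal_density 0 (sqrt (real (Suc n) * tau - real n * tau)) x * x ^ 2)"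
    using integrable_normal_moment[of "sqrt (real (Suc n) * tau - real n * tau)" 0 2] lt by (simp only: diff_zero real_sqrt_gt_zero diff_gt_0_iff_gt)
  then show ?thesis using distributed_integrable[OF D, of "\<lambda>x. x^2"] by simp
qed

lemma noise_int: "n < N \<Longrightarrow> integrable M (\<lambda>\<omega>. dW n \<omega> *\<^sub>R S n \<omega>)"
proof -
  assume n: "n < N"
  have i: "integrable M (\<lambda>\<omega>. (dW n \<omega>)\<^sup>2 + (norm (S n \<omega>))\<^sup>2)"
    using dW_sq S_adapted n by simp
  have "norm (dW n \<omega> *\<^sub>R S n \<omega>) \<le> norm ((dW n \<omega>)\<^sup>2 + (norm (S n \<omega>))\<^sup>2)" for \<omega>
  proof -
    have h1: "0 \<le> (\<bar>dW n \<omega>\<bar> - norm (S n \<omega>))\<^sup>2" by simp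
    have h2: "(\<bar>dW n \<omega>\<bar> - norm (S n \<omega>))\<^sup>2 = (dW n \<omega>)\<^sup>2 - 2 * (\<bar>dW n \<omega>\<bar> * norm (S n \<omega>)) + (norm (S n \<omega>))\<^sup>2"
      by (simp add: power2_eq_square algebra_simps)
    have h3: "0 \<le> \<bar>dW n \<omega>\<bar> * norm (S n \<omega>)" by simp
    have "\<bar>dW n \<omega>\<bar> * norm (S n \<omega>) \<le> (dW n \<omega>)\<^sup>2 + (norm (S n \<omega>))\<^sup>2" using h1 h2 h3 by linarith
    then show ?thesis by simp
  qed
  moreover have "(\<lambda>\<omega>. dW n \<omega> *\<^sub>R S n \<omega>) \<in> borel_measurable M"
    using dW_meas S_meas[OF n] by (rule borel_measurable_scaleR)
  ultimately show ?thesis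
    by (intro Bochner_Integration.integrable_bound[OF i] AE_I2)
qed

lemma X_int: "V \<in> admissible M B T N \<Longrightarrow> n \<le> N \<Longrightarrow> integrable M (X V n)"
proof (induction n)
  case 0
  interpret prob_space M by (rule prob)
  show ?case by simp
next
  case (Suc n)
  then have n: "n < N" by simp
  have "integrable M (\<lambda>\<omega>. X V n \<omega> + tau *\<^sub>R V (real n * tau) \<omega> + dW n \<omega> *\<^sub>R S n \<omega>)"
    using Suc adm[OF Suc.prems(1) n] noise_int[OF n] by simp
  then have "integrable M (\<lambda>\<omega>. Rv (X V n \<omega> + tau *\<^sub>R V (real n * tau) \<omega> + dW n \<omega> *\<^sub>R S n \<omega>))"
    by (rule integrable_bounded_linear[OF Rv_bl])
  then show ?case unfolding X_Suc .
qed

lemma EX_rec: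
  assumes V: "V \<in> admissible M B T N" and n: "n < N"
  shows "L (integral\<^sup>L M (X V (Suc n))) = integral\<^sup>L M (X V n) + tau *\<^sub>R integral\<^sup>L M (V (real n * tau))
      + integral\<^sup>L M (\<lambda>\<omega>. dW n \<omega> *\<^sub>R S n \<omega>)"
proof -
  have "L (integral\<^sup>L M (X V (Suc n))) = integral\<^sup>L M (\<lambda>\<omega>. L (X V (Suc n) \<omega>))"
    using integral_bounded_linear[OF L_bl X_int[OF V, of "Suc n"]] n by simp
  also have "\<dots> = integral\<^sup>L M (\<lambda>\<omega>. X V n \<omega> + tau *\<^sub>R V (real n * tau) \<omega> + dW n \<omega> *\<^sub>R S n \<omega>)"
    by (simp only: X_Suc L_Rv)
  also have "\<dots> = integral\<^sup>L M (X V n) + tau *\<^sub>R integral\<^sup>L M (V (real n * tau))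
      + integral\<^sup>L M (\<lambda>\<omega>. dW n \<omega> *\<^sub>R S n \<omega>)"
    using X_int[OF V, of n] adm(3)[OF V n] noise_int[OF n] n by simp
  finally show ?thesis .
qed

lemma fin_sub: "t \<ge> 0 \<Longrightarrow> sigma_finite_subalgebra M (nat_filtration M B t)"
proof -
  assume t: "t \<ge> 0"
  have "finite_measure_subalgebra M (nat_filtration M B t)"
    unfolding finite_measure_subalgebra_def finite_measure_subalgebra_axioms_def
    using prob subalg[OF t] by (simp add: prob_space_def)
  then show ?thesis by (rule finite_measure_subalgebra_is_sigma_finite)
qed

lemma vcond_int:
  assumes t: "t \<ge> 0" and Y: "integrable M Y"
  shows "integral\<^sup>L M (vcond_exp M (nat_filtration M B t) Y) = integral\<^sup>L M Y"
proof -
  let ?F = "nat_filtration M B t"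
  note sf = fin_sub[OF t]
  have ib: "integrable M (\<lambda>x. inner (Y x) b)" for b using Y by simp
  have "integral\<^sup>L M (vcond_exp M ?F Y) = (\<Sum>b\<in>Basis. integral\<^sup>L M (\<lambda>\<omega>. real_cond_exp M ?F (\<lambda>x. inner (Y x) b) \<omega> *\<^sub>R b))"
    unfolding vcond_exp_def
    by (rule Bochner_Integration.integral_sum[where I=Basis and f="\<lambda>b \<omega>. real_cond_exp M ?F (\<lambda>x. inner (Y x) b) \<omega> *\<^sub>R b"])
       (use sigma_finite_subalgebra.real_cond_exp_int(1)[OF sf ib] in simp)
  also have "\<dots> = (\<Sum>b\<in>Basis. integral\<^sup>L M (\<lambda>\<omega>. real_cond_exp M ?F (\<lambda>x. inner (Y x) b) \<omega>) *\<^sub>R b)"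
    using sigma_finite_subalgebra.real_cond_exp_int(1)[OF sf ib]
    by (intro sum.cong refl integral_scaleR_left) blast
  also have "\<dots> = (\<Sum>b\<in>Basis. integral\<^sup>L M (\<lambda>x. inner (Y x) b) *\<^sub>R b)"
    using sigma_finite_subalgebra.real_cond_exp_int(2)[OF sf ib] by simp
  also have "\<dots> = (\<Sum>b\<in>Basis. inner (integral\<^sup>L M Y) b *\<^sub>R b)"
    using Y by simp
  also have "\<dots> = integral\<^sup>L M Y" by (rule euclidean_representation)
  finally show ?thesis .
qed

lemma cost_eq:
  assumes V: "V \<in> admissible M B T N"
  shows "cost M B T N Lap one X0 S V = (\<Sum>n<N. tau * inner (integral\<^sup>L M (X V (Suc n))) one)"
proof -
  have "((\<lambda>t. inner (integral\<^sup>L M (Xproc M B T N Lap X0 S V t)) one) has_integral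
      (\<Sum>n<N. tau *\<^sub>R inner (integral\<^sup>L M (X V (Suc n))) one)) {0..real N * tau}"
  proof (rule step_has_integral[OF tau_pos])
    fix n t assume n: "n < N" and t1: "real n * tau < t" and t2: "t < real (Suc n) * tau"
    have ts: "tstep tau t = n" using tstep_eq[OF tau_pos _ t2] t1 by simp
    have ne: "t \<noteq> real n * tau" using t1 by simp
    have "Xproc M B T N Lap X0 S V t = vcond_exp M (nat_filtration M B (real n * tau)) (X V (Suc n))"
      unfolding Xproc_def tau_def[symmetric] Let_def ts using ne by simp
    then show "inner (integral\<^sup>L M (Xproc M B T N Lap X0 S V t)) one = inner (integral\<^sup>L M (X V (Suc n))) one"
      using vcond_int[of "real n * tau" "X V (Suc n)"] X_int[OF V, of "Suc n"] n tau_pos by simp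
  qed
  then show ?thesis unfolding cost_def T_eq[symmetric] by (simp add: integral_unique)
qed

definition K where "K = integral {0..T} (\<lambda>t. inner (Qtilde T N Lap one t) one)"

lemma K_eq: "K = (\<Sum>n<N. tau * inner (Qdisc T N Lap one (Suc n)) one)"
proof -
  have "((\<lambda>t. inner (Qtilde T N Lap one t) one) has_integral
      (\<Sum>n<N. tau *\<^sub>R inner (Qdisc T N Lap one (Suc n)) one)) {0..real N * tau}"
  proof (rule step_has_integral[OF tau_pos])
    fix n t assume n: "n < N" and t1: "real n * tau < t" and t2: "t < real (Suc n) * tau"
    show "inner (Qtilde T N Lap one t) one = inner (Qdisc T N Lap one (Suc n)) one"
      unfolding Qtilde_def tau_def[symmetric] using ceil_eq[OF tau_pos t1] t2 by simp
  qed
  then show ?thesis unfolding K_def T_eq[symmetric] by (simp add: integral_unique)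
qed

lemma Mt_eq: "real n * tau \<le> t \<Longrightarrow> t < real (Suc n) * tau \<Longrightarrow> Mtilde T N Lap one t = md n"
  unfolding Mtilde_def tau_def[symmetric] using tstep_eq[OF tau_pos] by simp

lemma duality:
  assumes e: "\<And>n. n < N \<Longrightarrow> L (e (Suc n)) = e n + tau *\<^sub>R u n" and e0: "e 0 = 0"
  shows "(\<Sum>n<N. tau * inner (e (Suc n)) one) = (\<Sum>n<N. tau * inner (md n) (u n))"
proof -
  let ?g = "\<lambda>n. inner (md n) (e n)"
  have "tau * inner (md n) (u n) = (?g (Suc n) - ?g n) + tau * inner (e (Suc n)) one" if n: "n < N" for n
  proof -
    have "tau * inner (md n) (u n) = inner (md n) (tau *\<^sub>R u n)" by simp
    also have "\<dots> = inner (md n) (L (e (Suc n)) - e n)" using e[OF n] by simp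
    also have "\<dots> = inner (L (md n)) (e (Suc n)) - inner (md n) (e n)"
      by (simp add: inner_diff_right L_sym)
    also have "\<dots> = (?g (Suc n) - ?g n) + tau * inner (e (Suc n)) one"
      using md_rec[OF n] by (simp add: inner_add_left inner_add_right inner_commute)
    finally show ?thesis .
  qed
  then have "(\<Sum>n<N. tau * inner (md n) (u n)) = (\<Sum>n<N. (?g (Suc n) - ?g n) + tau * inner (e (Suc n)) one)"
    by (intro sum.cong) auto
  also have "\<dots> = (?g N - ?g 0) + (\<Sum>n<N. tau * inner (e (Suc n)) one)"
    by (simp only: sum.distrib sum_lessThan_telescope[of ?g N])
  also have "\<dots> = (\<Sum>n<N. tau * inner (e (Suc n)) one)" using md_N e0 by simp
  finally show ?thesis by simp
qed

abbreviation EV where "EV V n \<equiv> integral\<^sup>L M (V (real n * tau))"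

lemma cost_diff:
  assumes V: "V \<in> admissible M B T N" and P: "P \<in> admissible M B T N"
  shows "cost M B T N Lap one X0 S V - cost M B T N Lap one X0 S P
       = (\<Sum>n<N. tau * inner (md n) (EV V n - EV P n))"
proof -
  let ?e = "\<lambda>n. integral\<^sup>L M (X V n) - integral\<^sup>L M (X P n)"
  have "cost M B T N Lap one X0 S V - cost M B T N Lap one X0 S P = (\<Sum>n<N. tau * inner (?e (Suc n)) one)"
    unfolding cost_eq[OF V] cost_eq[OF P] by (simp add: sum_subtractf[symmetric] inner_diff_left algebra_simps)
  also have "\<dots> = (\<Sum>n<N. tau * inner (md n) (EV V n - EV P n))"
  proof (rule duality)
    fix n assume n: "n < N"
    have "L (?e (Suc n)) = L (integral\<^sup>L M (X V (Suc n))) - L (integral\<^sup>L M (X P (Suc n)))"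
      using L_lin by (simp add: linear_diff)
    also have "\<dots> = ?e n + tau *\<^sub>R (EV V n - EV P n)"
      unfolding EX_rec[OF V n] EX_rec[OF P n] by (simp add: algebra_simps)
    finally show "L (?e (Suc n)) = ?e n + tau *\<^sub>R (EV V n - EV P n)" .
  next
    have "X V 0 = (\<lambda>\<omega>. X0)" "X P 0 = (\<lambda>\<omega>. X0)" by (rule ext, simp)+
    then show "?e 0 = 0" by simp
  qed
  finally show ?thesis .
qed

lemma K_md: "K = (\<Sum>n<N. tau * inner (md n) (md n))"
  unfolding K_eq
proof (rule duality)
  show "\<And>n. n < N \<Longrightarrow> L (Qdisc T N Lap one (Suc n)) = Qdisc T N Lap one n + tau *\<^sub>R md n" by (rule Q_rec)
  show "Qdisc T N Lap one 0 = 0" by simp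
qed

lemma sq_diff_int:
  assumes V: "V \<in> admissible M B T N" and P: "P \<in> admissible M B T N" and n: "n < N"
  shows "integrable M (\<lambda>\<omega>. (norm (V (real n * tau) \<omega> - P (real n * tau) \<omega>))\<^sup>2)"
proof -
  let ?v = "V (real n * tau)" and ?p = "P (real n * tau)"
  have i: "integrable M (\<lambda>\<omega>. 2 * (norm (?v \<omega>))\<^sup>2 + 2 * (norm (?p \<omega>))\<^sup>2)"
    using adm(2)[OF V n] adm(2)[OF P n] by simp
  have m: "(\<lambda>\<omega>. (norm (?v \<omega> - ?p \<omega>))\<^sup>2) \<in> borel_measurable M"
    using adm(1)[OF V n] adm(1)[OF P n] by measurable
  have "norm ((norm (?v \<omega> - ?p \<omega>))\<^sup>2) \<le> norm (2 * (norm (?v \<omega>))\<^sup>2 + 2 * (norm (?p \<omega>))\<^sup>2)" for \<omega>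
  proof -
    have t: "norm (?v \<omega> - ?p \<omega>) \<le> norm (?v \<omega>) + norm (?p \<omega>)" by (rule norm_triangle_ineq4)
    have "(norm (?v \<omega> - ?p \<omega>))\<^sup>2 \<le> (norm (?v \<omega>) + norm (?p \<omega>))\<^sup>2"
      using t by (intro power_mono) auto
    also have "\<dots> \<le> 2 * (norm (?v \<omega>))\<^sup>2 + 2 * (norm (?p \<omega>))\<^sup>2"
    proof -
      have "0 \<le> (norm (?v \<omega>) - norm (?p \<omega>))\<^sup>2" by simp
      then show ?thesis by (simp add: power2_eq_square algebra_simps)
    qed
    finally show ?thesis by simp
  qed
  then show ?thesis by (intro Bochner_Integration.integrable_bound[OF i m] AE_I2)
qed

end

lemma key_ineq:
  fixes A Bp \<delta> K :: real
  assumes K: "K > 0"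
  defines "d \<equiv> (max (A - \<delta>) 0 - max (Bp - \<delta>) 0) / K"
  shows "- 2 * d * (A - Bp) + d * d * K \<le> 0"
proof -
  define q where "q = max (A - \<delta>) 0 - max (Bp - \<delta>) 0"
  define e where "e = A - Bp"
  have qe: "0 \<le> q * e" "q * q \<le> q * e"
  proof -
    have "(0 \<le> q \<and> q \<le> e) \<or> (e \<le> q \<and> q \<le> 0)" unfolding q_def e_def by linarith
    then show "0 \<le> q * e" "q * q \<le> q * e"
      by (auto intro: mult_nonneg_nonneg mult_nonpos_nonpos mult_left_mono mult_left_mono_neg)
  qed
  have q: "q * (q - 2 * e) \<le> 0" using qe by (simp add: algebra_simps)
  have "- 2 * d * (A - Bp) + d * d * K = (q * (q - 2 * e)) / K"
    using K by (simp add: d_def q_def e_def field_simps)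
  also have "\<dots> \<le> 0" using q K by (simp add: divide_nonpos_pos)
  finally show ?thesis .
qed

context ctx
begin

lemma Rh_eq:
  assumes rho: "\<rho> > 0"
  shows "Rh M B T N Lap one X0 S \<delta> \<rho> V =
     (\<lambda>t \<omega>. V t \<omega> - (max (cost M B T N Lap one X0 S V - \<delta>) 0 / K) *\<^sub>R Mtilde T N Lap one t)"
  unfolding Rh_def mu_def K_def[symmetric] using rho by simp



end


context ctx begin
lemma part1:
  assumes rho: "\<rho> > 0" and Kp: "K > 0"
    and V: "V \<in> admissible M B T N" and W: "W \<in> admissible M B T N"
    and cW: "cost M B T N Lap one X0 S W \<le> \<delta>"
  shows "integral\<^sup>L M (\<lambda>\<omega>. integral {0..T} (\<lambda>t.
              inner (V t \<omega> - Rh M B T N Lap one X0 S \<delta> \<rho> V t \<omega>)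
                    (W t \<omega> - Rh M B T N Lap one X0 S \<delta> \<rho> V t \<omega>))) \<le> 0"
proof -
  interpret prob_space M by (rule prob)
  define c where "c = max (cost M B T N Lap one X0 S V - \<delta>) 0 / K"
  have Rh: "Rh M B T N Lap one X0 S \<delta> \<rho> V = (\<lambda>t \<omega>. V t \<omega> - c *\<^sub>R Mtilde T N Lap one t)"
    unfolding c_def by (rule Rh_eq[OF rho])
  have pt: "integral {0..T} (\<lambda>t. inner (V t \<omega> - Rh M B T N Lap one X0 S \<delta> \<rho> V t \<omega>)
                    (W t \<omega> - Rh M B T N Lap one X0 S \<delta> \<rho> V t \<omega>))
     = (\<Sum>n<N. tau * inner (c *\<^sub>R md n) (W (real n * tau) \<omega> - V (real n * tau) \<omega> + c *\<^sub>R md n))" for \<omega>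
  proof -
    have "((\<lambda>t. inner (V t \<omega> - Rh M B T N Lap one X0 S \<delta> \<rho> V t \<omega>)
                    (W t \<omega> - Rh M B T N Lap one X0 S \<delta> \<rho> V t \<omega>)) has_integral
       (\<Sum>n<N. tau *\<^sub>R inner (c *\<^sub>R md n) (W (real n * tau) \<omega> - V (real n * tau) \<omega> + c *\<^sub>R md n))) {0..real N * tau}"
    proof (rule step_has_integral[OF tau_pos])
      fix n t assume n: "n < N" and t1: "real n * tau < t" and t2: "t < real (Suc n) * tau"
      have e1: "V t = V (real n * tau)" by (rule adm(4)[OF V n]) (use t1 t2 in auto)
      have e2: "W t = W (real n * tau)" by (rule adm(4)[OF W n]) (use t1 t2 in auto)
      have e3: "Mtilde T N Lap one t = md n" using Mt_eq t1 t2 by simp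
      show "inner (V t \<omega> - Rh M B T N Lap one X0 S \<delta> \<rho> V t \<omega>) (W t \<omega> - Rh M B T N Lap one X0 S \<delta> \<rho> V t \<omega>)
          = inner (c *\<^sub>R md n) (W (real n * tau) \<omega> - V (real n * tau) \<omega> + c *\<^sub>R md n)"
        unfolding Rh e1 e2 e3 by (simp add: diff_diff_eq2 diff_add_eq)
    qed
    then show ?thesis unfolding T_eq[symmetric] by (simp add: integral_unique)
  qed
  have termE: "integral\<^sup>L M (\<lambda>\<omega>. tau * inner (c *\<^sub>R md n) (W (real n * tau) \<omega> - V (real n * tau) \<omega> + c *\<^sub>R md n))
      = tau * inner (c *\<^sub>R md n) (EV W n - EV V n + c *\<^sub>R md n)"
    and termi: "integrable M (\<lambda>\<omega>. tau * inner (c *\<^sub>R md n) (W (real n * tau) \<omega> - V (real n * tau) \<omega> + c *\<^sub>R md n))"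
    if n: "n < N" for n
  proof -
    have iW: "integrable M (W (real n * tau))" and iV: "integrable M (V (real n * tau))"
      using adm(3)[OF W n] adm(3)[OF V n] .
    have i2: "integrable M (\<lambda>\<omega>. W (real n * tau) \<omega> - V (real n * tau) \<omega> + c *\<^sub>R md n)"
      using iW iV by simp
    show "integrable M (\<lambda>\<omega>. tau * inner (c *\<^sub>R md n) (W (real n * tau) \<omega> - V (real n * tau) \<omega> + c *\<^sub>R md n))"
      using i2 by simp
    have "integral\<^sup>L M (\<lambda>\<omega>. W (real n * tau) \<omega> - V (real n * tau) \<omega> + c *\<^sub>R md n) = EV W n - EV V n + c *\<^sub>R md n"
      using iW iV by (simp add: prob_space)
    then show "integral\<^sup>L M (\<lambda>\<omega>. tau * inner (c *\<^sub>R md n) (W (real n * tau) \<omega> - V (real n * tau) \<omega> + c *\<^sub>R md n))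
      = tau * inner (c *\<^sub>R md n) (EV W n - EV V n + c *\<^sub>R md n)"
      using i2 by simp
  qed
  have "integral\<^sup>L M (\<lambda>\<omega>. integral {0..T} (\<lambda>t.
              inner (V t \<omega> - Rh M B T N Lap one X0 S \<delta> \<rho> V t \<omega>)
                    (W t \<omega> - Rh M B T N Lap one X0 S \<delta> \<rho> V t \<omega>)))
     = integral\<^sup>L M (\<lambda>\<omega>. \<Sum>n<N. tau * inner (c *\<^sub>R md n) (W (real n * tau) \<omega> - V (real n * tau) \<omega> + c *\<^sub>R md n))"
    unfolding pt ..
  also have "\<dots> = (\<Sum>n<N. integral\<^sup>L M (\<lambda>\<omega>. tau * inner (c *\<^sub>R md n) (W (real n * tau) \<omega> - V (real n * tau) \<omega> + c *\<^sub>R md n)))"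
    by (rule Bochner_Integration.integral_sum) (use termi in simp)
  also have "\<dots> = (\<Sum>n<N. tau * inner (c *\<^sub>R md n) (EV W n - EV V n + c *\<^sub>R md n))"
    using termE by (intro sum.cong) auto
  also have "\<dots> = (\<Sum>n<N. c * (tau * inner (md n) (EV W n - EV V n)) + c * c * (tau * inner (md n) (md n)))"
    by (intro sum.cong refl) (simp add: inner_add_right algebra_simps)
  also have "\<dots> = c * (\<Sum>n<N. tau * inner (md n) (EV W n - EV V n)) + c * c * (\<Sum>n<N. tau * inner (md n) (md n))"
    by (simp add: sum.distrib sum_distrib_left)
  also have "\<dots> = c * ((cost M B T N Lap one X0 S W - cost M B T N Lap one X0 S V) + c * K)"
    unfolding cost_diff[OF W V] K_md by (simp add: algebra_simps)
  also have "\<dots> \<le> 0"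
  proof (cases "cost M B T N Lap one X0 S V \<le> \<delta>")
    case True
    then show ?thesis by (simp add: c_def)
  next
    case False
    then have cK: "c * K = cost M B T N Lap one X0 S V - \<delta>" using Kp by (simp add: c_def)
    have c0: "c \<ge> 0" using Kp by (simp add: c_def)
    show ?thesis unfolding cK using c0 cW by (simp add: mult_nonneg_nonpos)
  qed
  finally show ?thesis .
qed

lemma part2:
  assumes rho: "\<rho> > 0" and Kp: "K > 0"
    and V: "V \<in> admissible M B T N" and P: "P \<in> admissible M B T N"
  shows "integral {0..T} (\<lambda>t. integral\<^sup>L M (\<lambda>\<omega>.
              (norm (Rh M B T N Lap one X0 S \<delta> \<rho> V t \<omega> - Rh M B T N Lap one X0 S \<delta> \<rho> P t \<omega>))\<^sup>2))
          \<le> integral {0..T} (\<lambda>t. integral\<^sup>L M (\<lambda>\<omega>. (norm (V t \<omega> - P t \<omega>))\<^sup>2))"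
proof -
  interpret prob_space M by (rule prob)
  define cV where "cV = max (cost M B T N Lap one X0 S V - \<delta>) 0 / K"
  define cP where "cP = max (cost M B T N Lap one X0 S P - \<delta>) 0 / K"
  define d where "d = cV - cP"
  have RV: "Rh M B T N Lap one X0 S \<delta> \<rho> V = (\<lambda>t \<omega>. V t \<omega> - cV *\<^sub>R Mtilde T N Lap one t)"
    unfolding cV_def by (rule Rh_eq[OF rho])
  have RP: "Rh M B T N Lap one X0 S \<delta> \<rho> P = (\<lambda>t \<omega>. P t \<omega> - cP *\<^sub>R Mtilde T N Lap one t)"
    unfolding cP_def by (rule Rh_eq[OF rho])
  let ?D = "\<lambda>n \<omega>. V (real n * tau) \<omega> - P (real n * tau) \<omega>"
  have L1: "integral {0..T} (\<lambda>t. integral\<^sup>L M (\<lambda>\<omega>.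
              (norm (Rh M B T N Lap one X0 S \<delta> \<rho> V t \<omega> - Rh M B T N Lap one X0 S \<delta> \<rho> P t \<omega>))\<^sup>2))
     = (\<Sum>n<N. tau * integral\<^sup>L M (\<lambda>\<omega>. (norm (?D n \<omega> - d *\<^sub>R md n))\<^sup>2))"
  proof -
    have "((\<lambda>t. integral\<^sup>L M (\<lambda>\<omega>.
              (norm (Rh M B T N Lap one X0 S \<delta> \<rho> V t \<omega> - Rh M B T N Lap one X0 S \<delta> \<rho> P t \<omega>))\<^sup>2)) has_integral
       (\<Sum>n<N. tau *\<^sub>R integral\<^sup>L M (\<lambda>\<omega>. (norm (?D n \<omega> - d *\<^sub>R md n))\<^sup>2))) {0..real N * tau}"
    proof (rule step_has_integral[OF tau_pos])
      fix n t assume n: "n < N" and t1: "real n * tau < t" and t2: "t < real (Suc n) * tau"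
      have e1: "V t = V (real n * tau)" by (rule adm(4)[OF V n]) (use t1 t2 in auto)
      have e2: "P t = P (real n * tau)" by (rule adm(4)[OF P n]) (use t1 t2 in auto)
      have e3: "Mtilde T N Lap one t = md n" using Mt_eq t1 t2 by simp
      have eqD: "\<And>\<omega>. V (real n * tau) \<omega> - cV *\<^sub>R md n - (P (real n * tau) \<omega> - cP *\<^sub>R md n) = ?D n \<omega> - d *\<^sub>R md n"
        by (simp add: d_def algebra_simps)
      show "integral\<^sup>L M (\<lambda>\<omega>. (norm (Rh M B T N Lap one X0 S \<delta> \<rho> V t \<omega> - Rh M B T N Lap one X0 S \<delta> \<rho> P t \<omega>))\<^sup>2)
          = integral\<^sup>L M (\<lambda>\<omega>. (norm (?D n \<omega> - d *\<^sub>R md n))\<^sup>2)"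
        unfolding RV RP e1 e2 e3 eqD by (rule refl)
    qed
    then show ?thesis unfolding T_eq[symmetric] by (simp add: integral_unique)
  qed
  have L2: "integral {0..T} (\<lambda>t. integral\<^sup>L M (\<lambda>\<omega>. (norm (V t \<omega> - P t \<omega>))\<^sup>2))
     = (\<Sum>n<N. tau * integral\<^sup>L M (\<lambda>\<omega>. (norm (?D n \<omega>))\<^sup>2))"
  proof -
    have "((\<lambda>t. integral\<^sup>L M (\<lambda>\<omega>. (norm (V t \<omega> - P t \<omega>))\<^sup>2)) has_integral
       (\<Sum>n<N. tau *\<^sub>R integral\<^sup>L M (\<lambda>\<omega>. (norm (?D n \<omega>))\<^sup>2))) {0..real N * tau}"
    proof (rule step_has_integral[OF tau_pos])
      fix n t assume n: "n < N" and t1: "real n * tau < t" and t2: "t < real (Suc n) * tau"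
      have e1: "V t = V (real n * tau)" by (rule adm(4)[OF V n]) (use t1 t2 in auto)
      have e2: "P t = P (real n * tau)" by (rule adm(4)[OF P n]) (use t1 t2 in auto)
      show "integral\<^sup>L M (\<lambda>\<omega>. (norm (V t \<omega> - P t \<omega>))\<^sup>2) = integral\<^sup>L M (\<lambda>\<omega>. (norm (?D n \<omega>))\<^sup>2)"
        unfolding e1 e2 ..
    qed
    then show ?thesis unfolding T_eq[symmetric] by (simp add: integral_unique)
  qed
  have termE: "integral\<^sup>L M (\<lambda>\<omega>. (norm (?D n \<omega> - d *\<^sub>R md n))\<^sup>2)
      = integral\<^sup>L M (\<lambda>\<omega>. (norm (?D n \<omega>))\<^sup>2) - 2 * d * inner (md n) (EV V n - EV P n) + d * d * inner (md n) (md n)"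
    if n: "n < N" for n
  proof -
    have pw: "(norm (x - d *\<^sub>R md n))\<^sup>2 = (norm x)\<^sup>2 - 2 * d * inner (md n) x + d * d * inner (md n) (md n)" for x
      by (simp add: power2_norm_eq_inner inner_diff_left inner_diff_right inner_commute algebra_simps)
    have iV: "integrable M (V (real n * tau))" and iP: "integrable M (P (real n * tau))"
      using adm(3)[OF V n] adm(3)[OF P n] .
    have iD: "integrable M (?D n)" using iV iP by simp
    have iD2: "integrable M (\<lambda>\<omega>. (norm (?D n \<omega>))\<^sup>2)" by (rule sq_diff_int[OF V P n])
    have "integral\<^sup>L M (\<lambda>\<omega>. (norm (?D n \<omega> - d *\<^sub>R md n))\<^sup>2)
        = integral\<^sup>L M (\<lambda>\<omega>. (norm (?D n \<omega>))\<^sup>2 - 2 * d * inner (md n) (?D n \<omega>) + d * d * inner (md n) (md n))"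
      unfolding pw ..
    also have "\<dots> = integral\<^sup>L M (\<lambda>\<omega>. (norm (?D n \<omega>))\<^sup>2) - 2 * d * inner (md n) (integral\<^sup>L M (?D n)) + d * d * inner (md n) (md n)"
      using iD iD2 by (simp add: prob_space)
    also have "integral\<^sup>L M (?D n) = EV V n - EV P n" using iV iP by simp
    finally show ?thesis .
  qed
  have "integral {0..T} (\<lambda>t. integral\<^sup>L M (\<lambda>\<omega>.
              (norm (Rh M B T N Lap one X0 S \<delta> \<rho> V t \<omega> - Rh M B T N Lap one X0 S \<delta> \<rho> P t \<omega>))\<^sup>2))
      = (\<Sum>n<N. tau * (integral\<^sup>L M (\<lambda>\<omega>. (norm (?D n \<omega>))\<^sup>2) - 2 * d * inner (md n) (EV V n - EV P n) + d * d * inner (md n) (md n)))"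
    unfolding L1 using termE by (intro sum.cong) auto
  also have "\<dots> = (\<Sum>n<N. tau * integral\<^sup>L M (\<lambda>\<omega>. (norm (?D n \<omega>))\<^sup>2))
       + (- 2 * d * (\<Sum>n<N. tau * inner (md n) (EV V n - EV P n)) + d * d * (\<Sum>n<N. tau * inner (md n) (md n)))"
  proof -
    have "(\<Sum>n<N. tau * (integral\<^sup>L M (\<lambda>\<omega>. (norm (?D n \<omega>))\<^sup>2) - 2 * d * inner (md n) (EV V n - EV P n) + d * d * inner (md n) (md n)))
      = (\<Sum>n<N. tau * integral\<^sup>L M (\<lambda>\<omega>. (norm (?D n \<omega>))\<^sup>2) + ((- 2 * d) * (tau * inner (md n) (EV V n - EV P n)) + (d * d) * (tau * inner (md n) (md n))))"
      by (intro sum.cong refl) (simp only: algebra_simps)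
    then show ?thesis by (simp only: sum.distrib sum_distrib_left)
  qed
  also have "\<dots> = integral {0..T} (\<lambda>t. integral\<^sup>L M (\<lambda>\<omega>. (norm (V t \<omega> - P t \<omega>))\<^sup>2))
       + (- 2 * d * (cost M B T N Lap one X0 S V - cost M B T N Lap one X0 S P) + d * d * K)"
    unfolding L2 cost_diff[OF V P] K_md ..
  also have "\<dots> \<le> integral {0..T} (\<lambda>t. integral\<^sup>L M (\<lambda>\<omega>. (norm (V t \<omega> - P t \<omega>))\<^sup>2))"
  proof -
    have "d = (max (cost M B T N Lap one X0 S V - \<delta>) 0 - max (cost M B T N Lap one X0 S P - \<delta>) 0) / K"
      unfolding d_def cV_def cP_def by (simp add: diff_divide_distrib)
    then have "- 2 * d * (cost M B T N Lap one X0 S V - cost M B T N Lap one X0 S P) + d * d * K \<le> 0"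
      using key_ineq[OF Kp] by simp
    then show ?thesis by simp
  qed
  finally show ?thesis .
qed

end

theorem mainTheorem8:
  fixes M :: "'a measure" and B :: "real \<Rightarrow> 'a \<Rightarrow> real"
    and T \<delta> \<rho> :: real and N :: nat
    and a :: "'v::euclidean_space \<Rightarrow> 'v \<Rightarrow> real" and Lap :: "'v \<Rightarrow> 'v" and one :: 'v
    and X0 :: 'v and S :: "nat \<Rightarrow> 'a \<Rightarrow> 'v"
  assumes complete: "\<forall>A0\<in>null_sets M. \<forall>A. A \<subseteq> A0 \<longrightarrow> A \<in> sets M"
    and BM: "brownian_motion M B"
    and T: "T > 0" and N: "N > 0" and tau: "T / real N \<le> 1"
    and a_sym: "\<forall>x y. a x y = a y x"
    and a_pos: "\<forall>x. x \<noteq> 0 \<longrightarrow> a x x > 0"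
    and Lap_lin: "linear Lap"
    and Lap_def: "\<forall>x y. inner (- Lap x) y = a x y"
    and S_adapted: "\<forall>n<N. S n \<in> borel_measurable (nat_filtration M B (real n * (T / real N)))
                        \<and> integrable M (\<lambda>\<omega>. (norm (S n \<omega>))\<^sup>2)"
    and Qpos: "integral {0..T} (\<lambda>t. inner (Qtilde T N Lap one t) one) > 0"
    and rho: "\<rho> > 0"
  shows "(\<forall>V\<in>admissible M B T N. \<forall>W\<in>admissible_delta M B T N Lap one X0 S \<delta>.
            integral\<^sup>L M (\<lambda>\<omega>. integral {0..T} (\<lambda>t.
              inner (V t \<omega> - Rh M B T N Lap one X0 S \<delta> \<rho> V t \<omega>)
                    (W t \<omega> - Rh M B T N Lap one X0 S \<delta> \<rho> V t \<omega>))) \<le> 0)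
       \<and> (\<forall>V\<in>admissible M B T N. \<forall>P\<in>admissible M B T N.
            integral {0..T} (\<lambda>t. integral\<^sup>L M (\<lambda>\<omega>.
              (norm (Rh M B T N Lap one X0 S \<delta> \<rho> V t \<omega> - Rh M B T N Lap one X0 S \<delta> \<rho> P t \<omega>))\<^sup>2))
          \<le> integral {0..T} (\<lambda>t. integral\<^sup>L M (\<lambda>\<omega>. (norm (V t \<omega> - P t \<omega>))\<^sup>2)))"
proof -
  interpret ctx M B T N a Lap one X0 S
    using BM T N a_sym a_pos Lap_lin Lap_def S_adapted by (rule ctx.intro)
  have Kp: "K > 0" using Qpos by (simp add: K_def)
  show ?thesis
  proof (intro conjI ballI)
    fix V W :: "real \<Rightarrow> 'a \<Rightarrow> 'v" assume V: "V \<in> admissible M B T N" and W: "W \<in> admissible_delta M B T N Lap one X0 S \<delta>"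
    have W1: "W \<in> admissible M B T N" and W2: "cost M B T N Lap one X0 S W \<le> \<delta>"
      using W by (simp_all add: admissible_delta_def)
    show "integral\<^sup>L M (\<lambda>\<omega>. integral {0..T} (\<lambda>t.
              inner (V t \<omega> - Rh M B T N Lap one X0 S \<delta> \<rho> V t \<omega>)
                    (W t \<omega> - Rh M B T N Lap one X0 S \<delta> \<rho> V t \<omega>))) \<le> 0"
      by (rule part1[OF rho Kp V W1 W2])
  next
    fix V P :: "real \<Rightarrow> 'a \<Rightarrow> 'v" assume V: "V \<in> admissible M B T N" and P: "P \<in> admissible M B T N"
    show "integral {0..T} (\<lambda>t. integral\<^sup>L M (\<lambda>\<omega>.
              (norm (Rh M B T N Lap one X0 S \<delta> \<rho> V t \<omega> - Rh M B T N Lap one X0 S \<delta> \<rho> P t \<omega>))\<^sup>2))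
          \<le> integral {0..T} (\<lambda>t. integral\<^sup>L M (\<lambda>\<omega>. (norm (V t \<omega> - P t \<omega>))\<^sup>2))"
      by (rule part2[OF rho Kp V P])
  qed
qed

end
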